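(* Let $s\in\mathbb N$, $R,p,\beta>0$, and let $\mathcal G$ be an $s$-uniform hypergraph. If $\mathcal G[W]$ is $(p,R)$-Janson for every $W\subset V(\mathcal G)$ with $|W|\ge(1-\beta)v(\mathcal G)$, then there exists $\mu:\mathcal G\to\mathbb R_{\ge0}$ with $$e(\mu)=\sqrt R,\qquad\Lambda_p(\mu)<\frac{e(\mu)^2}{R}\qquad\text{and}\qquad\sum_{v\in V(\mathcal G)}d_\mu(v)^2\le\frac{2s^2e(\mu)^2}{\beta\,v(\mathcal G)}.$$
   Context: A hypergraph is identified with its edge set; $v(\mathcal G)=|V(\mathcal G)|$; $\mathcal G[W]=\{E\in\mathcal G:E\subset W\}$. For $\nu:\mathcal G\to\mathbb R_{\ge0}$: $e(\nu)=\sum_E\nu(E)$, $d_\nu(L)=\sum_{E\in\mathcal G,L\subset E}\nu(E)$ (with $d_\nu(v)=d_\nu(\{v\})$), $\Lambda_p(\nu)=\sum_{L\subset V(\mathcal G),|L|\ge2}d_\nu(L)^2p^{-|L|}$. $\mathcal G$ is $(p,R)$-Janson if some $\nu:\mathcal G\to\mathbb R_{\ge0}$ has $\Lambda_p(\nu)<e(\nu)^2/R$. *)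

theory Defs
  imports Complex_Main
begin

text \<open>A hypergraph is identified with its edge set G; its vertex set is the union of the edges.\<close>

definition hverts :: "'a set set \<Rightarrow> 'a set" where
  "hverts G = \<Union>G"

definition induced :: "'a set set \<Rightarrow> 'a set \<Rightarrow> 'a set set" where
  "induced G W = {E \<in> G. E \<subseteq> W}"

definition uniform :: "nat \<Rightarrow> 'a set set \<Rightarrow> bool" where
  "uniform s G \<longleftrightarrow> finite G \<and> (\<forall>E\<in>G. finite E \<and> card E = s)"

definition hsize :: "'a set set \<Rightarrow> ('a set \<Rightarrow> real) \<Rightarrow> real" where
  "hsize G \<nu> = (\<Sum>E\<in>G. \<nu> E)"

definition hdeg :: "'a set set \<Rightarrow> ('a set \<Rightarrow> real) \<Rightarrow> 'a set \<Rightarrow> real" where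
  "hdeg G \<nu> L = (\<Sum>E\<in>{E\<in>G. L \<subseteq> E}. \<nu> E)"

definition Lambda :: "real \<Rightarrow> 'a set set \<Rightarrow> ('a set \<Rightarrow> real) \<Rightarrow> real" where
  "Lambda p G \<nu> = (\<Sum>L\<in>{L. L \<subseteq> hverts G \<and> card L \<ge> 2}. (hdeg G \<nu> L)\<^sup>2 * inverse p ^ card L)"

definition janson :: "real \<Rightarrow> real \<Rightarrow> 'a set set \<Rightarrow> bool" where
  "janson p R G \<longleftrightarrow> (\<exists>\<nu>. (\<forall>E\<in>G. \<nu> E \<ge> 0) \<and> Lambda p G \<nu> < (hsize G \<nu>)\<^sup>2 / R)"

end

theory Submission
  imports Defs "HOL-Analysis.L2_Norm"
begin

lemma uniform_fin_verts: "uniform s G \<Longrightarrow> finite (hverts G)"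
  unfolding uniform_def hverts_def by auto

lemma fin_S: "uniform s G \<Longrightarrow> finite {L. L \<subseteq> hverts G \<and> card L \<ge> 2}"
  using uniform_fin_verts by (metis (no_types, lifting) Collect_mono finite_Collect_subsets rev_finite_subset)

lemma hdeg_induced:
  assumes "finite G"
  shows "hdeg G (\<lambda>E. if E \<subseteq> W then \<nu> E else 0) L = hdeg (induced G W) \<nu> L"
proof -
  have "hdeg G (\<lambda>E. if E \<subseteq> W then \<nu> E else 0) L = (\<Sum>E\<in>{E\<in>G. L \<subseteq> E} \<inter> {E. E \<subseteq> W}. \<nu> E)"
    unfolding hdeg_def using assms by (simp add: sum.inter_restrict)
  also have "{E\<in>G. L \<subseteq> E} \<inter> {E. E \<subseteq> W} = {E\<in>induced G W. L \<subseteq> E}"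
    unfolding induced_def by auto
  finally show ?thesis unfolding hdeg_def .
qed

lemma hsize_induced:
  assumes "finite G"
  shows "hsize G (\<lambda>E. if E \<subseteq> W then \<nu> E else 0) = hsize (induced G W) \<nu>"
proof -
  have "hsize G (\<lambda>E. if E \<subseteq> W then \<nu> E else 0) = (\<Sum>E\<in>G \<inter> {E. E \<subseteq> W}. \<nu> E)"
    unfolding hsize_def using assms by (simp add: sum.inter_restrict)
  also have "G \<inter> {E. E \<subseteq> W} = induced G W"
    unfolding induced_def by auto
  finally show ?thesis unfolding hsize_def .
qed

lemma Lambda_induced:
  assumes "uniform s G"
  shows "Lambda p G (\<lambda>E. if E \<subseteq> W then \<nu> E else 0) = Lambda p (induced G W) \<nu>"
proof -
  have fG: "finite G" using assms uniform_def by auto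
  let ?S = "{L. L \<subseteq> hverts G \<and> card L \<ge> 2}"
  let ?T = "{L. L \<subseteq> hverts (induced G W) \<and> card L \<ge> 2}"
  have sub: "?T \<subseteq> ?S" unfolding hverts_def induced_def by auto
  have "Lambda p G (\<lambda>E. if E \<subseteq> W then \<nu> E else 0)
      = (\<Sum>L\<in>?S. (hdeg (induced G W) \<nu> L)\<^sup>2 * inverse p ^ card L)"
    unfolding Lambda_def using hdeg_induced[OF fG] by simp
  also have "\<dots> = (\<Sum>L\<in>?T. (hdeg (induced G W) \<nu> L)\<^sup>2 * inverse p ^ card L)"
  proof (rule sum.mono_neutral_right[OF fin_S[OF assms] sub], rule ballI)
    fix L assume L: "L \<in> ?S - ?T"
    then have "L \<noteq> {}" by auto
    have "{E\<in>induced G W. L \<subseteq> E} = {}"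
    proof (rule ccontr)
      assume "{E\<in>induced G W. L \<subseteq> E} \<noteq> {}"
      then obtain E where "E \<in> induced G W" "L \<subseteq> E" by auto
      then have "L \<subseteq> hverts (induced G W)" unfolding hverts_def by auto
      with L show False by auto
    qed
    then have "hdeg (induced G W) \<nu> L = 0" unfolding hdeg_def by (simp only: sum.empty)
    then show "(hdeg (induced G W) \<nu> L)\<^sup>2 * inverse p ^ card L = 0" by simp
  qed
  finally show ?thesis unfolding Lambda_def .
qed

lemma hdeg_scale: "hdeg G (\<lambda>E. c * \<nu> E) L = c * hdeg G \<nu> L"
  unfolding hdeg_def by (simp add: sum_distrib_left)

lemma hsize_scale: "hsize G (\<lambda>E. c * \<nu> E) = c * hsize G \<nu>"
  unfolding hsize_def by (simp add: sum_distrib_left)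

lemma Lambda_scale: "Lambda p G (\<lambda>E. c * \<nu> E) = c\<^sup>2 * Lambda p G \<nu>"
  unfolding Lambda_def hdeg_scale by (simp add: sum_distrib_left power_mult_distrib mult.assoc)

lemma hdeg_add: "hdeg G (\<lambda>E. T E + \<nu> E) L = hdeg G T L + hdeg G \<nu> L"
  unfolding hdeg_def by (simp add: sum.distrib)

lemma hsize_add: "hsize G (\<lambda>E. T E + \<nu> E) = hsize G T + hsize G \<nu>"
  unfolding hsize_def by (simp add: sum.distrib)

lemma Lambda_nonneg: "p > 0 \<Longrightarrow> Lambda p G \<nu> \<ge> 0"
  unfolding Lambda_def by (intro sum_nonneg) simp

lemma Lambda_L2:
  assumes "p > 0"
  shows "sqrt (Lambda p G \<nu>) = L2_set (\<lambda>L. hdeg G \<nu> L * sqrt (inverse p ^ card L)) {L. L \<subseteq> hverts G \<and> card L \<ge> 2}"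
  unfolding L2_set_def Lambda_def using assms by (simp add: power_mult_distrib)

lemma Lambda_mink:
  assumes "p > 0"
  shows "sqrt (Lambda p G (\<lambda>E. T E + \<nu> E)) \<le> sqrt (Lambda p G T) + sqrt (Lambda p G \<nu>)"
  unfolding Lambda_L2[OF assms] hdeg_add
  using L2_set_triangle_ineq[of "\<lambda>L. hdeg G T L * sqrt (inverse p ^ card L)"
     "\<lambda>L. hdeg G \<nu> L * sqrt (inverse p ^ card L)"] by (simp add: distrib_right)

lemma double_count:
  assumes "uniform s G"
  shows "(\<Sum>v\<in>hverts G. hdeg G T {v}) = real s * hsize G T"
proof -
  have fG: "finite G" and cE: "\<And>E. E \<in> G \<Longrightarrow> finite E \<and> card E = s" using assms uniform_def by auto
  have fV: "finite (hverts G)" using uniform_fin_verts[OF assms] .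
  have "(\<Sum>v\<in>hverts G. hdeg G T {v}) = (\<Sum>v\<in>hverts G. \<Sum>E\<in>G. if v \<in> E then T E else 0)"
    unfolding hdeg_def
  proof (rule sum.cong[OF refl])
    fix v
    have "{E\<in>G. {v} \<subseteq> E} = G \<inter> {E. v \<in> E}" by auto
    then show "sum T {E\<in>G. {v} \<subseteq> E} = (\<Sum>E\<in>G. if v \<in> E then T E else 0)"
      using fG by (simp add: sum.inter_restrict)
  qed
  also have "\<dots> = (\<Sum>E\<in>G. \<Sum>v\<in>hverts G. if v \<in> E then T E else 0)" by (rule sum.swap)
  also have "\<dots> = (\<Sum>E\<in>G. real s * T E)"
  proof (rule sum.cong[OF refl])
    fix E assume E: "E \<in> G"
    have "(\<Sum>v\<in>hverts G. if v \<in> E then T E else 0) = (\<Sum>v\<in>hverts G \<inter> E. T E)"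
      using fV by (simp only: sum.inter_restrict)
    also have "hverts G \<inter> E = E" using E unfolding hverts_def by auto
    finally show "(\<Sum>v\<in>hverts G. if v \<in> E then T E else 0) = real s * T E" using cE[OF E] by simp
  qed
  finally show ?thesis unfolding hsize_def by (simp add: sum_distrib_left)
qed


lemma hdeg_nonneg: "\<forall>E\<in>G. \<nu> E \<ge> 0 \<Longrightarrow> hdeg G \<nu> L \<ge> 0"
  unfolding hdeg_def by (intro sum_nonneg) auto

lemma hdeg_le_hsize:
  assumes "finite G" "\<forall>E\<in>G. \<nu> E \<ge> 0"
  shows "hdeg G \<nu> L \<le> hsize G \<nu>"
  unfolding hdeg_def hsize_def using assms by (intro sum_mono2) auto

lemma witness:
  assumes R: "R > 0" and p: "p > 0" and u: "uniform s G" and j: "janson p R (induced G W)"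
  shows "\<exists>\<nu>. (\<forall>E\<in>G. \<nu> E \<ge> 0) \<and> (\<forall>E\<in>G. \<not> E \<subseteq> W \<longrightarrow> \<nu> E = 0) \<and> hsize G \<nu> = 1
           \<and> Lambda p G \<nu> < 1 / R"
proof -
  have fG: "finite G" using u uniform_def by auto
  obtain \<nu>0 where nn: "\<forall>E\<in>induced G W. \<nu>0 E \<ge> 0"
    and lt: "Lambda p (induced G W) \<nu>0 < (hsize (induced G W) \<nu>0)\<^sup>2 / R"
    using j unfolding janson_def by blast
  define \<nu>1 where "\<nu>1 = (\<lambda>E. if E \<subseteq> W then \<nu>0 E else 0)"
  have nn1: "\<forall>E\<in>G. \<nu>1 E \<ge> 0" using nn unfolding \<nu>1_def induced_def by auto
  have L1: "Lambda p G \<nu>1 = Lambda p (induced G W) \<nu>0" unfolding \<nu>1_def by (rule Lambda_induced[OF u])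
  have H1: "hsize G \<nu>1 = hsize (induced G W) \<nu>0" unfolding \<nu>1_def by (rule hsize_induced[OF fG])
  define e where "e = hsize G \<nu>1"
  have e0: "e \<ge> 0" unfolding e_def hsize_def using nn1 by (intro sum_nonneg) auto
  have lt1: "Lambda p G \<nu>1 < e\<^sup>2 / R" using lt L1 H1 e_def by simp
  have "e \<noteq> 0" using lt1 Lambda_nonneg[OF p, of G \<nu>1] by auto
  with e0 have epos: "e > 0" by simp
  define \<nu> where "\<nu> = (\<lambda>E. (1/e) * \<nu>1 E)"
  have "Lambda p G \<nu> = (1/e)\<^sup>2 * Lambda p G \<nu>1" unfolding \<nu>_def by (rule Lambda_scale)
  also have "\<dots> < (1/e)\<^sup>2 * (e\<^sup>2 / R)" using lt1 epos by (intro mult_strict_left_mono) auto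
  also have "\<dots> = 1 / R" using epos by (simp add: field_simps)
  finally have "Lambda p G \<nu> < 1 / R" .
  moreover have "hsize G \<nu> = 1" unfolding \<nu>_def hsize_scale e_def[symmetric] using epos by simp
  moreover have "\<forall>E\<in>G. \<nu> E \<ge> 0" using nn1 epos unfolding \<nu>_def by auto
  moreover have "\<forall>E\<in>G. \<not> E \<subseteq> W \<longrightarrow> \<nu> E = 0" unfolding \<nu>_def \<nu>1_def by auto
  ultimately show ?thesis by blast
qed


lemma step:
  assumes R: "R > 0" and p: "p > 0" and b: "\<beta> > 0" and u: "uniform s G"
    and hyp: "\<forall>W. W \<subseteq> hverts G \<and> real (card W) \<ge> (1 - \<beta>) * real (card (hverts G))
           \<longrightarrow> janson p R (induced G W)"
    and a: "a = real s / (\<beta> * real (card (hverts G)))"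
    and n: "card (hverts G) > 0" and sp: "s > 0"
    and Tnn: "\<forall>E\<in>G. T E \<ge> 0" and Ts: "hsize G T = real k"
    and TL: "sqrt (Lambda p G T) \<le> real k / sqrt R"
    and Td: "\<forall>v\<in>hverts G. hdeg G T {v} \<le> a * real k + 1"
  shows "\<exists>T'. (\<forall>E\<in>G. T' E \<ge> 0) \<and> hsize G T' = real (Suc k)
      \<and> sqrt (Lambda p G T') < real (Suc k) / sqrt R
      \<and> (\<forall>v\<in>hverts G. hdeg G T' {v} \<le> a * real (Suc k) + 1)"
proof -
  have fG: "finite G" using u uniform_def by auto
  have fV: "finite (hverts G)" using uniform_fin_verts[OF u] .
  define V where "V = hverts G"
  define n' where "n' = real (card V)"
  have n'pos: "n' > 0" using n unfolding n'_def V_def by simp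
  have apos: "a > 0" using a n'pos sp b unfolding n'_def V_def by simp
  define W where "W = {v\<in>V. hdeg G T {v} \<le> a * real k}"
  have WV: "W \<subseteq> V" unfolding W_def by auto
  have fW: "finite W" "finite (V - W)" using fV WV unfolding V_def by (auto intro: finite_subset)
  have cardsplit: "card V = card W + card (V - W)"
    using fW WV by (metis card_Diff_subset card_mono fV V_def add_diff_inverse_nat not_less)
  have cVW: "real (card (V - W)) \<le> \<beta> * n'"
  proof (cases "k = 0")
    case True
    have "V - W = {}" using hdeg_le_hsize[OF fG Tnn] Ts True unfolding W_def by auto
    then show ?thesis using b n'pos by (simp only: card.empty) simp
  next
    case False
    have "real (card (V - W)) * (a * real k) \<le> (\<Sum>v\<in>V - W. hdeg G T {v})"
      by (rule sum_bounded_below) (auto simp: W_def)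
    also have "\<dots> \<le> (\<Sum>v\<in>V. hdeg G T {v})"
      using fV hdeg_nonneg[OF Tnn] unfolding V_def by (intro sum_mono2) auto
    also have "\<dots> = real s * real k" using double_count[OF u] Ts unfolding V_def by simp
    finally have "real (card (V - W)) * (a * real k) \<le> real s * real k" .
    then have "real (card (V - W)) * a \<le> real s" using False by (simp add: mult.assoc[symmetric])
    then have "real (card (V - W)) * real s \<le> real s * (\<beta> * n')"
      using a b n'pos unfolding n'_def V_def by (simp add: field_simps)
    then show ?thesis using sp by (simp add: mult.commute)
  qed
  have "real (card W) \<ge> (1 - \<beta>) * real (card V)"
    using cardsplit cVW unfolding n'_def by (simp add: algebra_simps)
  then have "janson p R (induced G W)" using hyp WV unfolding V_def by blast
  then obtain \<nu> where nnn: "\<forall>E\<in>G. \<nu> E \<ge> 0" and zer: "\<forall>E\<in>G. \<not> E \<subseteq> W \<longrightarrow> \<nu> E = 0"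
    and ns: "hsize G \<nu> = 1" and nL: "Lambda p G \<nu> < 1 / R"
    using witness[OF R p u] by blast
  define T' where "T' = (\<lambda>E. T E + \<nu> E)"
  have "sqrt (Lambda p G T') \<le> sqrt (Lambda p G T) + sqrt (Lambda p G \<nu>)"
    unfolding T'_def by (rule Lambda_mink[OF p])
  also have "sqrt (Lambda p G \<nu>) < 1 / sqrt R" using nL R by (metis real_sqrt_divide real_sqrt_less_mono real_sqrt_one)
  finally have L': "sqrt (Lambda p G T') < real (Suc k) / sqrt R" using TL by (simp add: add_divide_distrib)
  have D': "\<forall>v\<in>hverts G. hdeg G T' {v} \<le> a * real (Suc k) + 1"
  proof
    fix v assume v: "v \<in> hverts G"
    have dsum: "hdeg G T' {v} = hdeg G T {v} + hdeg G \<nu> {v}" unfolding T'_def by (rule hdeg_add)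
    show "hdeg G T' {v} \<le> a * real (Suc k) + 1"
    proof (cases "v \<in> W")
      case True
      then have "hdeg G T {v} \<le> a * real k" unfolding W_def by auto
      moreover have "hdeg G \<nu> {v} \<le> 1" using hdeg_le_hsize[OF fG nnn] ns by metis
      ultimately show ?thesis using dsum apos by (simp add: algebra_simps)
    next
      case False
      have "hdeg G \<nu> {v} = 0" unfolding hdeg_def using zer False
        by (intro sum.neutral) auto
      moreover have "hdeg G T {v} \<le> a * real k + 1" using Td v by blast
      ultimately show ?thesis using dsum apos by (simp add: algebra_simps)
    qed
  qed
  have "hsize G T' = real (Suc k)" unfolding T'_def hsize_add Ts ns by simp
  moreover have "\<forall>E\<in>G. T' E \<ge> 0" unfolding T'_def using Tnn nnn by (simp add: add_nonneg_nonneg)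
  ultimately show ?thesis using L' D' by blast
qed


theorem lemma7p5:
  fixes s :: nat and R p \<beta> :: real and G :: "'a set set"
  assumes "R > 0" "p > 0" "\<beta> > 0"
    and "uniform s G"
    and "\<forall>W. W \<subseteq> hverts G \<and> real (card W) \<ge> (1 - \<beta>) * real (card (hverts G))
           \<longrightarrow> janson p R (induced G W)"
  shows "\<exists>\<mu>. (\<forall>E\<in>G. \<mu> E \<ge> 0) \<and> hsize G \<mu> = sqrt R
           \<and> Lambda p G \<mu> < (hsize G \<mu>)\<^sup>2 / R
           \<and> (\<Sum>v\<in>hverts G. (hdeg G \<mu> {v})\<^sup>2)
               \<le> 2 * real s ^ 2 * (hsize G \<mu>)\<^sup>2 / (\<beta> * real (card (hverts G)))"
proof -
  note R = assms(1) and p = assms(2) and b = assms(3) and u = assms(4) and hyp = assms(5)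
  have fG: "finite G" using u uniform_def by auto
  have fV: "finite (hverts G)" using uniform_fin_verts[OF u] .
  show ?thesis
  proof (cases "card (hverts G) = 0")
    case True
    have "induced G (hverts G) = G" unfolding induced_def hverts_def by auto
    moreover have "janson p R (induced G (hverts G))" using hyp True by simp
    ultimately have "janson p R G" by simp
    then have "janson p R (induced G (hverts G))" by (simp add: \<open>induced G (hverts G) = G\<close>)
    then obtain \<nu> where nn: "\<forall>E\<in>G. \<nu> E \<ge> 0" and ns: "hsize G \<nu> = 1" and nL: "Lambda p G \<nu> < 1 / R"
      using witness[OF R p u] by blast
    define \<mu> where "\<mu> = (\<lambda>E. sqrt R * \<nu> E)"
    have hs: "hsize G \<mu> = sqrt R" unfolding \<mu>_def hsize_scale ns by simp
    have "Lambda p G \<mu> = R * Lambda p G \<nu>" unfolding \<mu>_def Lambda_scale using R by simp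
    also have "\<dots> < R * (1 / R)" using nL R by (intro mult_strict_left_mono) auto
    also have "\<dots> = (hsize G \<mu>)\<^sup>2 / R" using R hs by simp
    finally have "Lambda p G \<mu> < (hsize G \<mu>)\<^sup>2 / R" .
    moreover have "hverts G = {}" using True fV by simp
    moreover have "\<forall>E\<in>G. \<mu> E \<ge> 0" using nn R unfolding \<mu>_def by simp
    ultimately show ?thesis using hs by (intro exI[of _ \<mu>]) simp
  next
    case False
    then have n: "card (hverts G) > 0" by simp
    then have "hverts G \<noteq> {}" by (metis card.empty less_irrefl)
    then obtain v where "v \<in> hverts G" by (meson ex_in_conv)
    then obtain E where E: "E \<in> G" "v \<in> E" unfolding hverts_def by (meson UnionE)
    have "finite E \<and> card E = s" using u E(1) unfolding uniform_def by blast
    then have sp: "s > 0" using E(2) card_gt_0_iff by blast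
    define a where "a = real s / (\<beta> * real (card (hverts G)))"
    have apos: "a > 0" unfolding a_def using n sp b by simp
    have claim: "\<exists>T. (\<forall>E\<in>G. T E \<ge> 0) \<and> hsize G T = real k
      \<and> sqrt (Lambda p G T) \<le> real k / sqrt R
      \<and> (\<forall>v\<in>hverts G. hdeg G T {v} \<le> a * real k + 1)" for k
    proof (induction k)
      case 0
      have "hsize G (\<lambda>E. 0) = 0" unfolding hsize_def by simp
      moreover have "hdeg G (\<lambda>E. 0) L = 0" for L unfolding hdeg_def by simp
      moreover have "Lambda p G (\<lambda>E. 0) = 0" unfolding Lambda_def hdeg_def by simp
      ultimately show ?case by (intro exI[of _ "\<lambda>E. 0"]) simp
    next
      case (Suc k)
      then obtain T where "\<forall>E\<in>G. T E \<ge> 0" "hsize G T = real k"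
        "sqrt (Lambda p G T) \<le> real k / sqrt R" "\<forall>v\<in>hverts G. hdeg G T {v} \<le> a * real k + 1"
        by blast
      from step[OF R p b u hyp a_def n sp this] obtain T' where
        "\<forall>E\<in>G. T' E \<ge> 0" "hsize G T' = real (Suc k)"
        "sqrt (Lambda p G T') < real (Suc k) / sqrt R"
        "\<forall>v\<in>hverts G. hdeg G T' {v} \<le> a * real (Suc k) + 1" by blast
      then show ?case by (intro exI[of _ T']) (simp add: less_imp_le)
    qed
    obtain K :: nat where K: "1 / a \<le> real K" using real_arch_simple by blast
    obtain T where Tnn: "\<forall>E\<in>G. T E \<ge> 0" and Ts: "hsize G T = real K"
        and TL: "sqrt (Lambda p G T) \<le> real K / sqrt R" and Td: "\<forall>v\<in>hverts G. hdeg G T {v} \<le> a * real K + 1"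
      using claim by blast
    obtain T' where T'nn: "\<forall>E\<in>G. T' E \<ge> 0" and T's: "hsize G T' = real (Suc K)"
      and T'L: "sqrt (Lambda p G T') < real (Suc K) / sqrt R"
      and T'd: "\<forall>v\<in>hverts G. hdeg G T' {v} \<le> a * real (Suc K) + 1"
      using step[OF R p b u hyp a_def n sp Tnn Ts TL Td] by blast
    define N where "N = real (Suc K)"
    have Npos: "N > 0" unfolding N_def by simp
    have aN: "1 \<le> a * N" using K apos unfolding N_def by (simp add: field_simps)
    have T'd2: "\<forall>v\<in>hverts G. hdeg G T' {v} \<le> 2 * a * N"
    proof
      fix v assume "v \<in> hverts G"
      then have "hdeg G T' {v} \<le> a * N + 1" using T'd unfolding N_def by blast
      then show "hdeg G T' {v} \<le> 2 * a * N" using aN by linarith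
    qed
    define c where "c = sqrt R / N"
    have cpos: "c > 0" unfolding c_def using R Npos by simp
    define \<mu> where "\<mu> = (\<lambda>E. c * T' E)"
    have hs: "hsize G \<mu> = sqrt R" unfolding \<mu>_def hsize_scale T's c_def N_def by simp
    have LT': "Lambda p G T' < N\<^sup>2 / R"
    proof -
      have "Lambda p G T' = (sqrt (Lambda p G T'))\<^sup>2" using Lambda_nonneg[OF p, of G T'] by simp
      also have "\<dots> < (N / sqrt R)\<^sup>2" using T'L Lambda_nonneg[OF p, of G T'] unfolding N_def
        by (intro power_strict_mono) auto
      also have "\<dots> = N\<^sup>2 / R" using R by (simp add: power_divide)
      finally show ?thesis .
    qed
    have "Lambda p G \<mu> = c\<^sup>2 * Lambda p G T'" unfolding \<mu>_def by (rule Lambda_scale)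
    also have "\<dots> < c\<^sup>2 * (N\<^sup>2 / R)" using LT' cpos by (intro mult_strict_left_mono) auto
    also have "\<dots> = 1" unfolding c_def using R Npos by (simp add: power_divide)
    also have "\<dots> = (hsize G \<mu>)\<^sup>2 / R" using hs R by simp
    finally have LamM: "Lambda p G \<mu> < (hsize G \<mu>)\<^sup>2 / R" .
    have "(\<Sum>v\<in>hverts G. (hdeg G \<mu> {v})\<^sup>2) = c\<^sup>2 * (\<Sum>v\<in>hverts G. (hdeg G T' {v})\<^sup>2)"
      unfolding \<mu>_def hdeg_scale by (simp add: sum_distrib_left power_mult_distrib)
    also have "(\<Sum>v\<in>hverts G. (hdeg G T' {v})\<^sup>2) \<le> (\<Sum>v\<in>hverts G. (2 * a * N) * hdeg G T' {v})"
    proof (rule sum_mono)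
      fix v assume v: "v \<in> hverts G"
      have "0 \<le> hdeg G T' {v}" using hdeg_nonneg[OF T'nn] .
      then show "(hdeg G T' {v})\<^sup>2 \<le> (2 * a * N) * hdeg G T' {v}"
        using T'd2 v by (simp add: power2_eq_square mult_right_mono)
    qed
    also have "\<dots> = (2 * a * N) * (real s * N)"
      using double_count[OF u, of T'] T's unfolding N_def by (simp add: sum_distrib_left[symmetric])
    finally have S1: "(\<Sum>v\<in>hverts G. (hdeg G \<mu> {v})\<^sup>2) \<le> c\<^sup>2 * ((2 * a * N) * (real s * N))"
      using cpos by (meson mult_left_mono zero_le_power2)
    have c2: "c\<^sup>2 = R / N\<^sup>2" unfolding c_def using R by (simp add: power_divide)
    have "c\<^sup>2 * ((2 * a * N) * (real s * N)) = (R / N\<^sup>2) * (N\<^sup>2 * (2 * a * real s))"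
      unfolding c2 by (simp only: power2_eq_square ac_simps)
    also have "\<dots> = R * (2 * a * real s)" using Npos by simp
    also have "\<dots> = 2 * real s ^ 2 * (hsize G \<mu>)\<^sup>2 / (\<beta> * real (card (hverts G)))"
      unfolding hs a_def using R by (simp add: power2_eq_square)
    finally have MD: "(\<Sum>v\<in>hverts G. (hdeg G \<mu> {v})\<^sup>2) \<le> 2 * real s ^ 2 * (hsize G \<mu>)\<^sup>2 / (\<beta> * real (card (hverts G)))"
      using S1 by simp
    have "\<forall>E\<in>G. \<mu> E \<ge> 0" using T'nn cpos unfolding \<mu>_def by simp
    then show ?thesis using hs LamM MD by blast
  qed
qed

end
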